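(* Let $Z(n)=\sum_{k=0}^{n-1}\frac{1+(-1)^{k}k!(n-k-1)!}{n}$ for positive integers $n$. For $0<\lvert x\rvert<1$, \[ \sum_{n=0}^{\infty}Z(n+1)\frac{x^{n}}{n!}=e^{x}-\frac{1}{x^{2}}\ln\left(1-x^{2}\right). \] *)

theory Defs
  imports Complex_Main
begin

definition Z :: "nat \<Rightarrow> real" where
  "Z n = (\<Sum>k<n. (1 + (-1) ^ k * fact k * fact (n - k - 1)) / real n)"

end

theory Submission
  imports Defs "HOL-Analysis.Analysis"
begin

lemma telesc:
  fixes b :: "nat \<Rightarrow> real"
  shows "(\<Sum>k\<le>m. (-1)^k * (b k + b (Suc k))) = b 0 + (-1)^m * b (Suc m)"
  by (induction m) (auto simp: algebra_simps)

lemma altsum: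
  "(real n + 2) * (\<Sum>k\<le>n. (-1)^k * fact k * fact (n - k)) = fact (n+1) * (1 + (-1)^n)"
proof -
  define b where "b k = (fact k * fact (n + 1 - k) :: real)" for k
  have eq: "(real n + 2) * ((-1)^k * fact k * fact (n - k)) = (-1)^k * (b k + b (Suc k))"
    if "k \<le> n" for k
  proof -
    have "n + 1 - k = Suc (n - k)" using that by simp
    then have "b k = fact k * ((real (n - k) + 1) * fact (n - k))"
      unfolding b_def by (simp add: algebra_simps)
    moreover have "b (Suc k) = (real k + 1) * fact k * fact (n - k)"
      unfolding b_def by (simp add: algebra_simps)
    moreover have "real (n - k) = real n - real k" using that by simp
    ultimately have "b k + b (Suc k) = (real n + 2) * (fact k * fact (n - k))"
      by (simp add: algebra_simps)
    then show ?thesis by (simp add: algebra_simps)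
  qed
  have "(real n + 2) * (\<Sum>k\<le>n. (-1)^k * fact k * fact (n - k))
      = (\<Sum>k\<le>n. (-1)^k * (b k + b (Suc k)))"
    by (simp add: sum_distrib_left eq)
  also have "\<dots> = b 0 + (-1)^n * b (Suc n)" by (rule telesc)
  also have "\<dots> = fact (n+1) * (1 + (-1)^n)" unfolding b_def by (simp add: algebra_simps)
  finally show ?thesis .
qed

lemma Zterm:
  "Z (n + 1) * x ^ n / fact n = x ^ n /\<^sub>R fact n + (1 + (-1)^n) / (real n + 2) * x ^ n"
proof -
  have s: "(\<Sum>k\<le>n. (-1)^k * fact k * fact (n - k)) = fact (n+1) * (1 + (-1)^n) / (real n + 2)"
    using altsum[of n] by (simp add: field_simps)
  have "Z (n+1) = (\<Sum>k\<le>n. (1 + (-1) ^ k * fact k * fact (n - k)) / real (n+1))"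
    unfolding Z_def by (simp add: lessThan_Suc_atMost)
  also have "\<dots> = (real (n+1) + (\<Sum>k\<le>n. (-1) ^ k * fact k * fact (n - k))) / real (n+1)"
    by (simp add: sum_divide_distrib[symmetric] sum.distrib)
  also have "\<dots> = 1 + fact n * (1 + (-1)^n) / (real n + 2)"
    unfolding s by (simp add: divide_simps) (simp add: algebra_simps)
  finally have zz: "Z (n+1) = 1 + fact n * (1 + (-1)^n) / (real n + 2)" .
  have "Z (n + 1) * x ^ n / fact n = x ^ n / fact n + (fact n * (1 + (-1)^n) / (real n + 2)) * x ^ n / fact n"
    unfolding zz by (simp add: add_divide_distrib distrib_right)
  also have "\<dots> = x ^ n /\<^sub>R fact n + (1 + (-1)^n) / (real n + 2) * x ^ n"
    by (simp add: divide_inverse)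
  finally show ?thesis .
qed

lemma evenpart:
  fixes x :: real
  assumes "0 < \<bar>x\<bar>" and "\<bar>x\<bar> < 1"
  shows "(\<lambda>n. (1 + (-1)^n) / (real n + 2) * x ^ n) sums (- ln (1 - x\<^sup>2) / x\<^sup>2)"
proof -
  have "\<bar>-x\<^sup>2\<bar> < 1" using assms by (simp add: abs_square_less_1)
  from ln_series'[OF this] have "(\<lambda>n. - ((x\<^sup>2)^n) / of_nat n) sums ln (1 - x\<^sup>2)" by simp
  then have "(\<lambda>n. - ((x\<^sup>2)^Suc n) / of_nat (Suc n)) sums ln (1 - x\<^sup>2)"
    by (subst sums_Suc_iff) simp
  then have "(\<lambda>n. - ((x\<^sup>2)^Suc n) / of_nat (Suc n) / (- x\<^sup>2)) sums (ln (1 - x\<^sup>2) / (- x\<^sup>2))"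
    by (rule sums_divide)
  moreover have eqn: "- ((x\<^sup>2)^Suc n) / of_nat (Suc n) / (- x\<^sup>2) = (1 + (-1)^(2*n)) / (real (2*n) + 2) * x ^ (2*n)" for n
  proof -
    have x2: "x\<^sup>2 \<noteq> 0" using assms by simp
    have "- ((x\<^sup>2)^Suc n) / of_nat (Suc n) / (- x\<^sup>2) = (x\<^sup>2)^n / (real n + 1)"
      using x2 by (simp add: divide_simps add_pos_pos)
    moreover have "(1 + (-1)^(2*n)) / (real (2*n) + 2) * x ^ (2*n) = (x\<^sup>2)^n / (real n + 1)"
    proof -
      have a: "x^(2*n) = (x\<^sup>2)^n" by (simp add: power_mult)
      have b: "(-1::real)^(2*n) = 1" by simp
      show ?thesis unfolding a b by (simp add: divide_simps)
    qed
    ultimately show ?thesis by simp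
  qed
  define f where "f n = (1 + (-1)^n) / (real n + 2) * x ^ n" for n
  have minus: "ln (1 - x\<^sup>2) / (- x\<^sup>2) = - ln (1 - x\<^sup>2) / x\<^sup>2" by simp
  have fe: "(\<lambda>n. f (2*n)) = (\<lambda>n. - ((x\<^sup>2)^Suc n) / of_nat (Suc n) / (- x\<^sup>2))"
    by (rule ext) (simp only: f_def eqn)
  ultimately have "(\<lambda>n. f (2*n)) sums (- ln (1 - x\<^sup>2) / x\<^sup>2)"
    unfolding fe minus by blast
  moreover have "strict_mono (\<lambda>n::nat. 2*n)" by (simp add: strict_mono_def)
  moreover have "f n = 0" if "n \<notin> range (\<lambda>n::nat. 2*n)" for n
  proof -
    have "odd n" using that by (auto elim!: evenE)
    then show ?thesis unfolding f_def by simp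
  qed
  ultimately have "f sums (- ln (1 - x\<^sup>2) / x\<^sup>2)" using sums_mono_reindex[of "\<lambda>n. 2*n" f] by blast
  then show ?thesis unfolding f_def .
qed

theorem mainTheorem14:
  fixes x :: real
  assumes "0 < \<bar>x\<bar>" and "\<bar>x\<bar> < 1"
  shows "(\<lambda>n. Z (n + 1) * x ^ n / fact n) sums (exp x - ln (1 - x\<^sup>2) / x\<^sup>2)"
proof -
  have "(\<lambda>n. x ^ n /\<^sub>R fact n + (1 + (-1)^n) / (real n + 2) * x ^ n) sums (exp x + (- ln (1 - x\<^sup>2) / x\<^sup>2))"
    by (rule sums_add[OF exp_converges evenpart[OF assms]])
  then have "(\<lambda>n. Z (n + 1) * x ^ n / fact n) sums (exp x + (- ln (1 - x\<^sup>2) / x\<^sup>2))"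
    unfolding Zterm .
  then show ?thesis by simp
qed

end
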